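(* For every $d\in\mathbb{N}$, $d\ge1$, we have $\mathcal H_1^d\subset\mathcal N_d=b_d^{-1}(\mathcal H_1^d)$.
   Context: Identify $b=(b_1,\dots,b_d)\in\mathbb{R}^d$ with the monic polynomial $z^d+\sum_{k=1}^d b_k z^{d-k}$, and let $\mathcal H_1^d\subset\mathbb{R}^d$ be the set of $b$ for which this polynomial is hyperbolic (has only real roots). A sequence $a=(a_1,\dots,a_d)\in\mathbb{R}^d$ is a Nuij sequence if for every hyperbolic polynomial $p\in\mathbb{R}[z]$ of degree $d$, the polynomial $p(z)+\sum_{k=1}^d a_k s^k p^{(k)}(z)$ is hyperbolic for every $s\in\mathbb{R}$; $\mathcal N_d$ is the set of Nuij sequences in $\mathbb{R}^d$. The linear map $b_d:\mathbb{R}^d\to\mathbb{R}^d$ is $b_d(a_1,\dots,a_d)=\big(da_1,\dots,\tfrac{d!}{(d-k)!}a_k,\dots,d!\,a_d\big)$. *)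

theory Defs
  imports Complex_Main "HOL-Computational_Algebra.Polynomial"
begin

text \<open>A real polynomial is hyperbolic if all of its complex roots are real.
  (The zero polynomial is not hyperbolic, since every complex number is a root.)\<close>
definition hyperbolic :: "real poly \<Rightarrow> bool" where
  "hyperbolic p \<longleftrightarrow> (\<forall>z::complex. poly (map_poly of_real p) z = 0 \<longrightarrow> z \<in> \<real>)"

text \<open>Vectors in R^d are lists of length d; the entry b_k (1 \<le> k \<le> d) is b ! (k-1).\<close>
definition monic_of :: "real list \<Rightarrow> real poly" where
  "monic_of b = monom 1 (length b) + (\<Sum>k=1..length b. monom (b ! (k - 1)) (length b - k))"

definition H1 :: "nat \<Rightarrow> real list set" where
  "H1 d = {b. length b = d \<and> hyperbolic (monic_of b)}"

definition nuij_op :: "real list \<Rightarrow> real \<Rightarrow> real poly \<Rightarrow> real poly" where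
  "nuij_op a s p = p + (\<Sum>k=1..length a. smult (a ! (k - 1) * s ^ k) ((pderiv ^^ k) p))"

definition Nuij :: "nat \<Rightarrow> real list set" where
  "Nuij d = {a. length a = d \<and>
     (\<forall>p. hyperbolic p \<and> degree p = d \<longrightarrow> (\<forall>s::real. hyperbolic (nuij_op a s p)))}"

definition bmap :: "nat \<Rightarrow> real list \<Rightarrow> real list" where
  "bmap d a = map (\<lambda>k. fact d / fact (d - k) * a ! (k - 1)) [1..<d+1]"

end

theory Submission
  imports Defs "HOL-Computational_Algebra.Fundamental_Theorem_Algebra"
begin


definition cpoly :: "real poly \<Rightarrow> complex \<Rightarrow> complex" where
  "cpoly p z = poly (map_poly complex_of_real p) z"

lemma cpoly_add[simp]: "cpoly (p + q) z = cpoly p z + cpoly q z"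
proof -
  have "map_poly complex_of_real (p + q) = map_poly of_real p + map_poly of_real q"
    by (rule poly_eqI) (simp add: coeff_map_poly)
  thus ?thesis by (simp add: cpoly_def)
qed

lemma cpoly_diff[simp]: "cpoly (p - q) z = cpoly p z - cpoly q z"
proof -
  have "map_poly complex_of_real (p - q) = map_poly of_real p - map_poly of_real q"
    by (rule poly_eqI) (simp add: coeff_map_poly)
  thus ?thesis by (simp add: cpoly_def)
qed

lemma cpoly_mult[simp]: "cpoly (p * q) z = cpoly p z * cpoly q z"
proof -
  have "map_poly complex_of_real (p * q) = map_poly of_real p * map_poly of_real q"
    by (rule poly_eqI) (simp add: coeff_map_poly coeff_mult)
  thus ?thesis by (simp add: cpoly_def)
qed

lemma cpoly_smult[simp]: "cpoly (smult c p) z = of_real c * cpoly p z"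
  by (simp add: cpoly_def map_poly_smult)

lemma cpoly_pCons[simp]: "cpoly (pCons a p) z = of_real a + z * cpoly p z"
  by (simp add: cpoly_def map_poly_pCons)

lemma cpoly_0[simp]: "cpoly 0 z = 0" by (simp add: cpoly_def)
lemma cpoly_1[simp]: "cpoly 1 z = 1" by (simp add: cpoly_def)
lemma cpoly_monom[simp]: "cpoly (monom c n) z = of_real c * z ^ n"
  by (simp add: cpoly_def map_poly_monom poly_monom)
lemma cpoly_sum: "cpoly (sum f A) z = (\<Sum>x\<in>A. cpoly (f x) z)"
  by (induct A rule: infinite_finite_induct) auto
lemma cpoly_power[simp]: "cpoly (p ^ n) z = cpoly p z ^ n"
  by (induct n) auto
lemma cpoly_of_real[simp]: "cpoly p (of_real x) = of_real (poly p x)"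
  by (induct p) (auto simp: algebra_simps)
lemma cpoly_cnj: "cpoly p (cnj z) = cnj (cpoly p z)"
  by (induct p) auto

lemma hyperbolic_cpoly: "hyperbolic p \<longleftrightarrow> (\<forall>z. cpoly p z = 0 \<longrightarrow> z \<in> \<real>)"
  by (simp add: hyperbolic_def cpoly_def)

lemma hyperbolic_iff_Im: "hyperbolic p \<longleftrightarrow> (\<forall>z. Im z > 0 \<longrightarrow> cpoly p z \<noteq> 0)"
proof
  assume "hyperbolic p"
  thus "\<forall>z. Im z > 0 \<longrightarrow> cpoly p z \<noteq> 0"
    by (auto simp: hyperbolic_cpoly complex_is_Real_iff)
next
  assume H: "\<forall>z. Im z > 0 \<longrightarrow> cpoly p z \<noteq> 0"
  show "hyperbolic p" unfolding hyperbolic_cpoly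
  proof (intro allI impI)
    fix z assume z: "cpoly p z = 0"
    show "z \<in> \<real>"
    proof (rule ccontr)
      assume "z \<notin> \<real>"
      then have "Im z \<noteq> 0" by (simp add: complex_is_Real_iff)
      then consider "Im z > 0" | "Im (cnj z) > 0" by (cases "Im z > 0") auto
      then show False
      proof cases
        case 1 thus False using H z by blast
      next
        case 2
        have "cpoly p (cnj z) = 0" using z by (simp add: cpoly_cnj)
        thus False using H 2 by blast
      qed
    qed
  qed
qed

declare mult_pCons_left[simp del] mult_pCons_right[simp del]

fun prodlin :: "nat \<Rightarrow> (nat \<Rightarrow> real) \<Rightarrow> real poly" where
  "prodlin 0 r = 1"
| "prodlin (Suc n) r = [:- r 0, 1:] * prodlin n (\<lambda>j. r (Suc j))"

lemma prodlin_nz: "prodlin n r \<noteq> 0"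
proof (induct n arbitrary: r)
  case (Suc n)
  have "[:- r 0, 1:] \<noteq> 0" by simp
  then show ?case using Suc[of "\<lambda>j. r (Suc j)"] by (simp only: prodlin.simps mult_eq_0_iff) simp
qed simp

lemma degree_prodlin[simp]: "degree (prodlin n r) = n"
proof (induct n arbitrary: r)
  case (Suc n)
  have "degree ([:- r 0, 1:] * prodlin n (\<lambda>j. r (Suc j))) = Suc n"
    by (subst degree_mult_eq) (auto simp: prodlin_nz Suc)
  then show ?case by simp
qed simp

lemma lead_coeff_prodlin[simp]: "lead_coeff (prodlin n r) = 1"
proof (induct n arbitrary: r)
  case (Suc n)
  have "lead_coeff ([:- r 0, 1:] * prodlin n (\<lambda>j. r (Suc j))) = 1"
    using Suc[of "\<lambda>j. r (Suc j)"] by (subst lead_coeff_mult) simp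
  then show ?case by simp
qed simp

lemma cpoly_prodlin: "cpoly (prodlin n r) w = (\<Prod>j<n. w - of_real (r j))"
proof (induct n arbitrary: r)
  case (Suc n)
  have "cpoly ([:- r 0, 1:] * prodlin n (\<lambda>j. r (Suc j))) w = (w - of_real (r 0)) * (\<Prod>j<n. w - of_real (r (Suc j)))"
    by (simp only: cpoly_mult Suc) (simp add: algebra_simps)
  then show ?case by (simp only: prodlin.simps prod.lessThan_Suc_shift)
qed simp

lemma prodlin_const: "prodlin n (\<lambda>_. t) = [:-t, 1:] ^ n"
  by (induct n) (simp_all only: prodlin.simps power_Suc power_0)


lemma hyperbolic_factor:
  assumes "hyperbolic p"
  shows "\<exists>r. p = smult (lead_coeff p) (prodlin (degree p) r)"
  using assms
proof (induct "degree p" arbitrary: p)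
  case 0
  have "degree p = 0" using 0 by simp
  then obtain c where c: "p = [:c:]" by (rule degree_eq_zeroE)
  have "p = smult (lead_coeff p) (prodlin (degree p) r)" for r unfolding c by simp
  then show ?case by blast
next
  case (Suc n)
  have dm: "degree (map_poly complex_of_real p) = degree p"
    by (rule degree_map_poly) simp
  have "\<not> constant (poly (map_poly complex_of_real p))"
    unfolding constant_degree dm using Suc(2) by linarith
  then have "\<exists>z. poly (map_poly complex_of_real p) z = 0" by (rule fundamental_theorem_of_algebra)
  then obtain z where z: "cpoly p z = 0" unfolding cpoly_def by blast
  with Suc(3) have "z \<in> \<real>" by (simp add: hyperbolic_cpoly)
  then obtain x where zx: "z = of_real x" by (rule Reals_cases)
  have "poly p x = 0" using z zx by simp
  then have "[:-x, 1:] dvd p" by (simp only: poly_eq_0_iff_dvd)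
  then obtain q where pq: "p = [:-x, 1:] * q" by (rule dvdE)
  have qnz: "q \<noteq> 0"
  proof
    assume "q = 0"
    then have "p = 0" using pq by simp
    thus False using Suc(2) by simp
  qed
  have "degree p = degree [:-x,1:] + degree q" unfolding pq by (rule degree_mult_eq) (simp_all add: qnz)
  then have dq: "degree q = n" using Suc(2) by simp
  have "lead_coeff p = lead_coeff [:-x,1:] * lead_coeff q" unfolding pq by (rule lead_coeff_mult)
  then have lq: "lead_coeff q = lead_coeff p" by simp
  have "hyperbolic q" unfolding hyperbolic_cpoly
  proof (intro allI impI)
    fix w assume "cpoly q w = 0"
    then have "cpoly p w = 0" using pq by simp
    thus "w \<in> \<real>" using Suc(3) by (simp add: hyperbolic_cpoly)
  qed
  from Suc(1)[OF dq[symmetric] this] obtain r where r: "q = smult (lead_coeff q) (prodlin n r)" unfolding dq by blast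
  define r' where "r' = (\<lambda>j. if j = 0 then x else r (j - 1))"
  have pr: "prodlin (Suc n) r' = [:-x,1:] * prodlin n r" by (simp add: r'_def)
  have q2: "q = smult (lead_coeff p) (prodlin n r)" using r unfolding lq .
  have *: "p = smult (lead_coeff p) (prodlin (Suc n) r')"
    unfolding pr mult_smult_right[symmetric] q2[symmetric] by (rule pq)
  then have "\<exists>r. p = smult (lead_coeff p) (prodlin (Suc n) r)" by blast
  thus ?case by (simp only: Suc(2))
qed

lemma logderiv_prodlin:
  assumes "cpoly (prodlin n r) w \<noteq> 0"
  shows "cpoly (pderiv (prodlin n r)) w = cpoly (prodlin n r) w * (\<Sum>j<n. 1 / (w - of_real (r j)))"
  using assms
proof (induct n arbitrary: r)
  case 0 then show ?case by simp
next
  case (Suc n)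
  let ?P = "prodlin n (\<lambda>j. r (Suc j))"
  have ne: "w - of_real (r 0) \<noteq> 0" "cpoly ?P w \<noteq> 0" using Suc(2) by auto
  have IH: "cpoly (pderiv ?P) w = cpoly ?P w * (\<Sum>j<n. 1 / (w - of_real (r (Suc j))))"
    using Suc(1) ne by blast
  have "pderiv (prodlin (Suc n) r) = [:- r 0, 1:] * pderiv ?P + ?P"
    by (simp add: pderiv_mult pderiv_pCons)
  then have "cpoly (pderiv (prodlin (Suc n) r)) w = (w - of_real (r 0)) * cpoly (pderiv ?P) w + cpoly ?P w"
    by simp
  also have "\<dots> = (w - of_real (r 0)) * cpoly ?P w * (1 / (w - of_real (r 0)) + (\<Sum>j<n. 1 / (w - of_real (r (Suc j)))))"
    using ne IH by (simp add: field_simps)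
  also have "\<dots> = cpoly (prodlin (Suc n) r) w * (\<Sum>j<Suc n. 1 / (w - of_real (r j)))"
    by (simp del: sum.lessThan_Suc add: sum.lessThan_Suc_shift)
  finally show ?case .
qed



lemma hyperbolic_nz: "hyperbolic p \<Longrightarrow> p \<noteq> 0"
proof
  assume "hyperbolic p" "p = 0"
  then have "\<forall>z::complex. z \<in> \<real>" by (simp add: hyperbolic_cpoly)
  then have "\<i> \<in> \<real>" by blast
  thus False by (simp add: complex_is_Real_iff)
qed

lemma den_pos: "Im w > 0 \<Longrightarrow> (Re w - r)^2 + (Im w)^2 > 0"
  by (simp add: add_nonneg_pos)

lemma Im_inv_sub: "Im (1 / (w - complex_of_real r)) = - Im w / ((Re w - r)^2 + (Im w)^2)"
  by (simp add: Im_divide power2_eq_square)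

lemma Re_inv_sub: "Re (1 / (w - complex_of_real r)) = (Re w - r) / ((Re w - r)^2 + (Im w)^2)"
  by (simp add: Re_divide power2_eq_square)

lemma Im_S: fixes m :: nat shows "Im (\<Sum>j<m. 1 / (w - complex_of_real (r j))) = - (\<Sum>j<m. Im w / ((Re w - r j)^2 + (Im w)^2))"
  by (simp add: Im_sum Im_inv_sub sum_negf)

lemma Im_S_neg:
  fixes m :: nat
  assumes "Im w > 0" "m > 0"
  shows "Im (\<Sum>j<m. 1 / (w - complex_of_real (r j))) < 0"
proof -
  have "(\<Sum>j<m. Im w / ((Re w - r j)^2 + (Im w)^2)) > 0"
  proof (rule sum_pos)
    fix j assume "j \<in> {..<m}"
    show "Im w / ((Re w - r j)^2 + (Im w)^2) > 0" using assms(1) den_pos[OF assms(1)] by simp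
  qed (use assms(2) in auto)
  thus ?thesis unfolding Im_S by linarith
qed

lemma hyp_data:
  assumes "hyperbolic Q"
  obtains r where "Q = smult (lead_coeff Q) (prodlin (degree Q) r)" "lead_coeff Q \<noteq> 0"
    "\<And>w. Im w > 0 \<Longrightarrow> cpoly Q w \<noteq> 0"
    "\<And>w. Im w > 0 \<Longrightarrow> cpoly (pderiv Q) w = cpoly Q w * (\<Sum>j<degree Q. 1 / (w - of_real (r j)))"
proof -
  obtain r where r: "Q = smult (lead_coeff Q) (prodlin (degree Q) r)"
    using hyperbolic_factor[OF assms] by blast
  have lc: "lead_coeff Q \<noteq> 0" using hyperbolic_nz[OF assms] by simp
  have nz: "cpoly Q w \<noteq> 0" if "Im w > 0" for w
    using assms that by (simp add: hyperbolic_iff_Im)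
  have ld: "cpoly (pderiv Q) w = cpoly Q w * (\<Sum>j<degree Q. 1 / (w - of_real (r j)))" if "Im w > 0" for w
  proof -
    let ?P = "prodlin (degree Q) r"
    have e1: "cpoly Q w = of_real (lead_coeff Q) * cpoly ?P w"
      by (subst r) simp
    then have "cpoly ?P w \<noteq> 0" using nz[OF that] by auto
    note L = logderiv_prodlin[OF this]
    have "pderiv Q = smult (lead_coeff Q) (pderiv ?P)"
      by (subst r) (simp only: pderiv_smult)
    then have "cpoly (pderiv Q) w = of_real (lead_coeff Q) * cpoly (pderiv ?P) w" by simp
    also have "\<dots> = cpoly Q w * (\<Sum>j<degree Q. 1 / (w - of_real (r j)))"
      unfolding L e1 by simp
    finally show ?thesis .
  qed
  show ?thesis using that r lc nz ld by blast
qed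

lemma hyperbolic_pderiv:
  assumes "hyperbolic Q" "degree Q \<ge> 1"
  shows "hyperbolic (pderiv Q)"
proof -
  obtain r where H: "\<And>w. Im w > 0 \<Longrightarrow> cpoly Q w \<noteq> 0"
    "\<And>w. Im w > 0 \<Longrightarrow> cpoly (pderiv Q) w = cpoly Q w * (\<Sum>j<degree Q. 1 / (w - of_real (r j)))"
    using hyp_data[OF assms(1)] by metis
  show ?thesis unfolding hyperbolic_iff_Im
  proof (intro allI impI)
    fix w :: complex assume w: "Im w > 0"
    define S where "S = (\<Sum>j<degree Q. 1 / (w - of_real (r j)))"
    have "Im S < 0" unfolding S_def by (intro Im_S_neg[OF w]) (use assms(2) in simp)
    then have "S \<noteq> 0" by auto
    thus "cpoly (pderiv Q) w \<noteq> 0" using H[OF w] H(1)[OF w] unfolding S_def[symmetric] by simp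
  qed
qed

lemma S_zero_or_Im:
  fixes m :: nat
  assumes "Im w > 0"
  shows "Im (\<Sum>j<m. 1 / (w - complex_of_real (r j))) < 0 \<or> (\<Sum>j<m. 1 / (w - complex_of_real (r j))) = 0"
  using Im_S_neg[OF assms, of m r] by (cases "m = 0") auto

lemma hyperbolic_Lop:
  assumes "hyperbolic p"
  shows "hyperbolic (p - smult a (pderiv p))"
proof -
  obtain r where H: "\<And>w. Im w > 0 \<Longrightarrow> cpoly p w \<noteq> 0"
    "\<And>w. Im w > 0 \<Longrightarrow> cpoly (pderiv p) w = cpoly p w * (\<Sum>j<degree p. 1 / (w - of_real (r j)))"
    using hyp_data[OF assms(1)] by metis
  show ?thesis unfolding hyperbolic_iff_Im
  proof (intro allI impI notI)
    fix w :: complex assume w: "Im w > 0" and z: "cpoly (p - smult a (pderiv p)) w = 0"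
    define S where "S = (\<Sum>j<degree p. 1 / (w - of_real (r j)))"
    have "cpoly p w * (1 - of_real a * S) = 0" using z H[OF w] unfolding S_def by (simp add: algebra_simps)
    then have e: "of_real a * S = 1" using H(1)[OF w] by simp
    then have "Im (of_real a * S) = 0" by simp
    then have "a * Im S = 0" by simp
    moreover have "Im S < 0 \<or> S = 0" unfolding S_def by (rule S_zero_or_Im[OF w])
    ultimately have "of_real a * S = 0" by auto
    with e show False by simp
  qed
qed



lemma prodlin_cong: "(\<And>j. j < n \<Longrightarrow> r j = r' j) \<Longrightarrow> prodlin n r = prodlin n r'"
proof (induct n arbitrary: r r')
  case (Suc n)
  have "prodlin n (\<lambda>j. r (Suc j)) = prodlin n (\<lambda>j. r' (Suc j))"
    by (rule Suc(1)) (simp add: Suc(2))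
  moreover have "r 0 = r' 0" by (rule Suc(2)) simp
  ultimately show ?case by (simp only: prodlin.simps)
qed simp

lemma polar_term:
  fixes r t :: real and w :: complex
  assumes "Im w > 0"
  defines "d \<equiv> (Re w - r)^2 + (Im w)^2"
  shows "Re ((w - of_real t) / (w - of_real r)) = 1 + (Re w - t) * ((r - t) / d) - (r - t)^2 / d"
    and "Im ((w - of_real t) / (w - of_real r)) = - Im w * ((r - t) / d)"
proof -
  have dp: "d > 0" unfolding d_def using den_pos[OF assms(1)] .
  have "Re ((w - of_real t) / (w - of_real r)) = ((Re w - t) * (Re w - r) + (Im w)^2) / d"
    by (simp add: Re_divide d_def power2_eq_square)
  also have "\<dots> = (d + (Re w - t) * (r - t) - (r - t)^2) / d"
    by (rule arg_cong[where f="\<lambda>x. x / d"]) (simp add: d_def power2_eq_square algebra_simps)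
  also have "\<dots> = 1 + (Re w - t) * ((r - t) / d) - (r - t)^2 / d"
    using dp by (simp add: field_simps)
  finally show "Re ((w - of_real t) / (w - of_real r)) = 1 + (Re w - t) * ((r - t) / d) - (r - t)^2 / d" .
  have "Im ((w - of_real t) / (w - of_real r)) = (Im w * (Re w - r) - (Re w - t) * Im w) / d"
    by (simp add: Im_divide d_def power2_eq_square)
  also have "\<dots> = - Im w * ((r - t) / d)"
    by (simp add: algebra_simps diff_divide_distrib)
  finally show "Im ((w - of_real t) / (w - of_real r)) = - Im w * ((r - t) / d)" .
qed

lemma hyperbolic_polar:
  fixes N :: nat
  assumes hQ: "hyperbolic Q" and dQ: "degree Q \<le> N"
    and np: "\<not> (\<exists>c. Q = smult c ([:-t, 1:] ^ N))"
  shows "hyperbolic (Q - smult (1 / real N) ([:-t, 1:] * pderiv Q))"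
proof -
  obtain r where r: "Q = smult (lead_coeff Q) (prodlin (degree Q) r)"
    and H: "\<And>w. Im w > 0 \<Longrightarrow> cpoly Q w \<noteq> 0"
    "\<And>w. Im w > 0 \<Longrightarrow> cpoly (pderiv Q) w = cpoly Q w * (\<Sum>j<degree Q. 1 / (w - of_real (r j)))"
    using hyp_data[OF hQ] by metis
  let ?m = "degree Q"
  show ?thesis unfolding hyperbolic_iff_Im
  proof (intro allI impI notI)
    fix w :: complex assume w: "Im w > 0"
      and z: "cpoly (Q - smult (1 / real N) ([:-t, 1:] * pderiv Q)) w = 0"
    define S where "S = (\<Sum>j<?m. 1 / (w - of_real (r j)))"
    define d where "d j = (Re w - r j)^2 + (Im w)^2" for j
    define X where "X j = (r j - t) / d j" for j
    define Y where "Y j = (r j - t)^2 / d j" for j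
    define c where "c = complex_of_real (1 / real N)"
    have "cpoly (Q - smult (1 / real N) ([:-t, 1:] * pderiv Q)) w
        = cpoly Q w - c * ((w - of_real t) * cpoly (pderiv Q) w)"
      unfolding c_def by (simp add: algebra_simps)
    also have "\<dots> = cpoly Q w * (1 - c * ((w - of_real t) * S))"
      unfolding H(2)[OF w] S_def by (simp add: algebra_simps)
    finally have "cpoly Q w * (1 - c * ((w - of_real t) * S)) = 0" using z by simp
    then have c1: "c * ((w - of_real t) * S) = 1" using H(1)[OF w] by simp
    then have N0: "N \<noteq> 0" unfolding c_def by (cases "N = 0") auto
    have TN: "(w - of_real t) * S = of_nat N"
    proof -
      have "(w - of_real t) * S = of_nat N * (c * ((w - of_real t) * S))"
        unfolding c_def using N0 by (simp add: field_simps)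
      thus ?thesis using c1 by simp
    qed
    have T: "(w - of_real t) * S = (\<Sum>j<?m. (w - of_real t) / (w - of_real (r j)))"
      unfolding S_def by (simp add: sum_distrib_left)
    have ImT: "Im ((w - of_real t) * S) = - Im w * (\<Sum>j<?m. X j)"
      unfolding T Im_sum X_def d_def polar_term(2)[OF w] by (simp add: sum_distrib_left)
    have ReT: "Re ((w - of_real t) * S) = real ?m + (Re w - t) * (\<Sum>j<?m. X j) - (\<Sum>j<?m. Y j)"
      unfolding T Re_sum X_def Y_def d_def polar_term(1)[OF w]
      by (simp add: sum.distrib sum_subtractf sum_distrib_left)
    have "Im ((w - of_real t) * S) = 0" using TN by simp
    then have SX: "(\<Sum>j<?m. X j) = 0" using w unfolding ImT by simp
    have "Re ((w - of_real t) * S) = real N" using TN by simp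
    then have eq: "real ?m - (\<Sum>j<?m. Y j) = real N" using ReT SX by simp
    have Ynn: "Y j \<ge> 0" for j unfolding Y_def d_def using den_pos[OF w, of "r j"] by simp
    have "(\<Sum>j<?m. Y j) \<ge> 0" by (rule sum_nonneg) (use Ynn in auto)
    then have mN: "?m = N" and SY: "(\<Sum>j<?m. Y j) = 0" using eq dQ by linarith+
    have "\<forall>j\<in>{..<?m}. Y j = 0" using SY Ynn by (subst sum_nonneg_eq_0_iff[symmetric]) auto
    then have rt: "r j = t" if "j < ?m" for j
      using that den_pos[OF w, of "r j"] unfolding Y_def d_def by auto
    have "prodlin ?m r = prodlin ?m (\<lambda>_. t)" by (rule prodlin_cong) (use rt in auto)
    then have "Q = smult (lead_coeff Q) ([:-t, 1:] ^ N)" using r mN by (simp add: prodlin_const)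
    with np show False by blast
  qed
qed



definition D1 :: "nat \<Rightarrow> real poly \<Rightarrow> real poly" where
  "D1 n Q = smult (1 / real (Suc n)) (pderiv Q)"
definition D2 :: "nat \<Rightarrow> real poly \<Rightarrow> real poly" where
  "D2 n Q = Q - smult (1 / real (Suc n)) ([:0, 1:] * pderiv Q)"

fun Pol :: "nat \<Rightarrow> real poly \<Rightarrow> (nat \<Rightarrow> complex) \<Rightarrow> complex" where
  "Pol 0 Q x = of_real (coeff Q 0)"
| "Pol (Suc n) Q x = x 0 * Pol n (D1 n Q) (\<lambda>j. x (Suc j)) + Pol n (D2 n Q) (\<lambda>j. x (Suc j))"

lemma D1_add: "D1 n (P + Q) = D1 n P + D1 n Q"
  by (simp add: D1_def pderiv_add smult_add_right)
lemma D2_add: "D2 n (P + Q) = D2 n P + D2 n Q"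
  by (simp add: D2_def pderiv_add smult_add_right distrib_left algebra_simps)
lemma D1_smult: "D1 n (smult c P) = smult c (D1 n P)"
  by (simp add: D1_def pderiv_smult)
lemma D2_smult: "D2 n (smult c P) = smult c (D2 n P)"
  by (simp add: D2_def pderiv_smult smult_diff_right mult_smult_right)

lemma Pol_add: "Pol n (P + Q) x = Pol n P x + Pol n Q x"
  by (induct n arbitrary: P Q x) (simp_all add: D1_add D2_add algebra_simps)

lemma Pol_smult: "Pol n (smult c P) x = of_real c * Pol n P x"
  by (induct n arbitrary: P x) (simp_all add: D1_smult D2_smult algebra_simps)

lemma coeff_xpderiv: "coeff ([:0, 1:] * pderiv Q) m = of_nat m * coeff Q m"
proof -
  have "[:0, 1:] * pderiv Q = pCons 0 (pderiv Q)" by (simp add: mult_pCons_left)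
  thus ?thesis by (cases m) (simp_all add: coeff_pderiv)
qed

lemma coeff_D2: "coeff (D2 n Q) m = coeff Q m * (real (Suc n) - real m) / real (Suc n)"
  by (simp only: D2_def coeff_diff coeff_smult coeff_xpderiv) (simp add: field_simps)

lemma degree_D1: "degree Q \<le> Suc n \<Longrightarrow> degree (D1 n Q) \<le> n"
  by (simp add: D1_def degree_pderiv)

lemma degree_D2: "degree Q \<le> Suc n \<Longrightarrow> degree (D2 n Q) \<le> n"
proof (rule degree_le, intro allI impI)
  fix i assume d: "degree Q \<le> Suc n" and i: "n < i"
  show "coeff (D2 n Q) i = 0"
  proof (cases "i = Suc n")
    case True thus ?thesis by (simp add: coeff_D2)
  next
    case False
    then have "coeff Q i = 0" using d i by (intro coeff_eq_0) simp
    thus ?thesis by (simp add: coeff_D2)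
  qed
qed

lemma cpoly_X: "cpoly [:0, 1:] w = w" by simp

lemma Pol_diag: "degree Q \<le> n \<Longrightarrow> Pol n Q (\<lambda>_. w) = cpoly Q w"
proof (induct n arbitrary: Q)
  case 0
  then obtain c where "Q = [:c:]" by (metis degree_eq_zeroE le_zero_eq)
  thus ?case by simp
next
  case (Suc n)
  have "Pol (Suc n) Q (\<lambda>_. w) = w * cpoly (D1 n Q) w + cpoly (D2 n Q) w"
    using Suc(1)[OF degree_D1[OF Suc(2)]] Suc(1)[OF degree_D2[OF Suc(2)]] by simp
  also have "\<dots> = cpoly Q w"
    by (simp add: D1_def D2_def algebra_simps)
  finally show ?case .
qed

lemma Pol_zero[simp]: "Pol n 0 x = 0"
  using Pol_smult[of n 0 0 x] by simp

lemma Pol_const: "Pol n [:c:] x = of_real c"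
  by (induct n arbitrary: x) (simp_all add: D1_def D2_def)

lemma Pol_pow: "Pol n (smult c ([:-t, 1:] ^ n)) x = of_real c * (\<Prod>j<n. x j - of_real t)"
proof (induct n arbitrary: c x)
  case 0 then show ?case by simp
next
  case (Suc n)
  let ?L = "[:-t, 1:] :: real poly"
  have pd: "pderiv (smult c (?L ^ Suc n)) = smult (c * real (Suc n)) (?L ^ n)"
  proof -
    have o: "[:1:] = (1::real poly)" by simp
    show ?thesis by (simp only: pderiv_smult pderiv_power_Suc) (simp add: pderiv_pCons o)
  qed
  have e1: "D1 n (smult c (?L ^ Suc n)) = smult c (?L ^ n)"
    unfolding D1_def pd by simp
  have a1: "smult (1 / real (Suc n)) ([:0, 1:] * smult (c * real (Suc n)) (?L ^ n)) = smult c ([:0, 1:] * ?L ^ n)"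
    by (simp add: mult_smult_right)
  have a2: "smult c (?L ^ Suc n) - smult c ([:0, 1:] * ?L ^ n) = smult c ((?L - [:0, 1:]) * ?L ^ n)"
    by (simp only: power_Suc smult_diff_right left_diff_distrib)
  have a3: "(?L - [:0, 1:]) * ?L ^ n = smult (- t) (?L ^ n)"
    by (simp add: mult_pCons_left)
  have "D2 n (smult c (?L ^ Suc n)) = smult (- c * t) (?L ^ n)"
    unfolding D2_def pd a1 a2 a3 by simp
  then have e2: "D2 n (smult c (?L ^ Suc n)) = smult (- c * t) (?L ^ n)" .
  show ?case unfolding Pol.simps e1 e2 Suc
    by (simp add: prod.lessThan_Suc_shift del: prod.lessThan_Suc) (simp add: algebra_simps)
qed

lemma Pol_cont:
  assumes "\<And>j. continuous_on S (f j)"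
  shows "continuous_on S (\<lambda>s. Pol n Q (\<lambda>j. f j s))"
  using assms
proof (induct n arbitrary: Q f)
  case 0 then show ?case by simp
next
  case (Suc n)
  have c1: "continuous_on S (\<lambda>s. Pol n (D1 n Q) (\<lambda>j. f (Suc j) s))"
    using Suc(1)[of "\<lambda>j. f (Suc j)"] Suc(2) by blast
  have c2: "continuous_on S (\<lambda>s. Pol n (D2 n Q) (\<lambda>j. f (Suc j) s))"
    using Suc(1)[of "\<lambda>j. f (Suc j)"] Suc(2) by blast
  show ?case unfolding Pol.simps
    by (intro continuous_intros c1 c2 Suc(2))
qed



definition op :: "nat \<Rightarrow> real poly \<Rightarrow> real poly \<Rightarrow> real poly" where
  "op n Q p = (\<Sum>k\<le>n. smult (coeff Q (n - k) * fact (n - k) / fact n) ((pderiv ^^ k) p))"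

lemma funpow_pderiv_add: "(pderiv ^^ k) (p + q) = (pderiv ^^ k) p + (pderiv ^^ k) q"
  by (induct k) (simp_all add: pderiv_add)

lemma funpow_pderiv_smult: "(pderiv ^^ k) (smult c p) = smult c ((pderiv ^^ k) p)"
  by (induct k) (simp_all add: pderiv_smult)

lemma funpow_pderiv_diff: "(pderiv ^^ k) (p - q) = (pderiv ^^ k) p - (pderiv ^^ k) (q :: real poly)"
  by (induct k) (simp_all add: pderiv_diff)

lemma funpow_pderiv_zero: "degree p < k \<Longrightarrow> (pderiv ^^ k) (p :: real poly) = 0"
proof (induct k arbitrary: p)
  case 0 then show ?case by simp
next
  case (Suc k)
  have "(pderiv ^^ Suc k) p = (pderiv ^^ k) (pderiv p)" by (simp only: funpow_Suc_right o_def)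
  also have "\<dots> = 0"
  proof (cases "degree p = 0")
    case True
    then have "pderiv p = 0" by (simp add: pderiv_eq_0_iff)
    then show ?thesis by (induct k) simp_all
  next
    case False
    then have "degree (pderiv p) < k" using Suc(2) by (simp add: degree_pderiv)
    then show ?thesis by (rule Suc(1))
  qed
  finally show ?case .
qed

lemma funpow_pderiv_lin:
  "(pderiv ^^ k) ([:-r, 1:] * p) = [:-r, 1:] * (pderiv ^^ k) p + smult (of_nat k) ((pderiv ^^ (k - 1)) (p :: real poly))"
proof (induct k)
  case 0 then show ?case by simp
next
  case (Suc k)
  have o: "pderiv [:-r, 1:] = (1 :: real poly)" by (simp add: pderiv_pCons)
  have "(pderiv ^^ Suc k) ([:-r, 1:] * p) = pderiv ([:-r, 1:] * (pderiv ^^ k) p + smult (of_nat k) ((pderiv ^^ (k - 1)) p))"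
    using Suc by simp
  also have "\<dots> = [:-r, 1:] * (pderiv ^^ Suc k) p + (pderiv ^^ k) p + smult (of_nat k) (pderiv ((pderiv ^^ (k - 1)) p))"
    by (simp add: pderiv_add pderiv_mult pderiv_smult o)
  also have "smult (of_nat k) (pderiv ((pderiv ^^ (k - 1)) p)) = smult (of_nat k) ((pderiv ^^ k) p)"
    by (cases k) simp_all
  finally show ?case by (simp only: diff_Suc_1 of_nat_Suc smult_add_left smult_1_left add.assoc)
qed

lemma cA:
  assumes "k \<le> n"
  shows "coeff Q (Suc n - k) * fact (Suc n - k) / fact (Suc n) = coeff (D1 n Q) (n - k) * fact (n - k) / (fact n :: real)"
proof -
  have e: "Suc n - k = Suc (n - k)" using assms by simp
  show ?thesis unfolding e by (simp add: D1_def coeff_pderiv fact_Suc field_simps del: of_nat_Suc)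
qed

lemma cB:
  assumes "j \<le> n"
  shows "coeff Q (Suc n - Suc j) * fact (Suc n - Suc j) / fact (Suc n) * of_nat (Suc j) = coeff (D2 n Q) (n - j) * fact (n - j) / (fact n :: real)"
proof -
  have e: "real (Suc n) - real (n - j) = real (Suc j)" using assms by (simp add: of_nat_diff)
  show ?thesis unfolding coeff_D2 e by (simp add: fact_Suc field_simps del: of_nat_Suc)
qed

lemma op_step:
  assumes "degree p \<le> n"
  shows "op (Suc n) Q ([:-r, 1:] * p) = [:-r, 1:] * op n (D1 n Q) p + op n (D2 n Q) p"
proof -
  define c where "c k = coeff Q (Suc n - k) * fact (Suc n - k) / (fact (Suc n) :: real)" for k
  have "op (Suc n) Q ([:-r, 1:] * p) = (\<Sum>k\<le>Suc n. smult (c k) ([:-r, 1:] * (pderiv ^^ k) p + smult (of_nat k) ((pderiv ^^ (k - 1)) p)))"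
    unfolding op_def c_def funpow_pderiv_lin ..
  also have "\<dots> = [:-r, 1:] * (\<Sum>k\<le>Suc n. smult (c k) ((pderiv ^^ k) p)) + (\<Sum>k\<le>Suc n. smult (c k * of_nat k) ((pderiv ^^ (k - 1)) p))"
    by (simp only: smult_add_right sum.distrib sum_distrib_left mult_smult_right smult_smult)
  also have "(\<Sum>k\<le>Suc n. smult (c k) ((pderiv ^^ k) p)) = (\<Sum>k\<le>n. smult (c k) ((pderiv ^^ k) p))"
    using funpow_pderiv_zero[of p "Suc n"] assms by simp
  also have "\<dots> = op n (D1 n Q) p"
    unfolding op_def by (rule sum.cong) (simp_all only: c_def cA atMost_iff)
  also have "(\<Sum>k\<le>Suc n. smult (c k * of_nat k) ((pderiv ^^ (k - 1)) p)) = (\<Sum>j\<le>n. smult (c (Suc j) * of_nat (Suc j)) ((pderiv ^^ j) p))"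
    by (simp only: sum.atMost_Suc_shift) simp
  also have "\<dots> = op n (D2 n Q) p"
    unfolding op_def by (rule sum.cong) (simp_all only: c_def cB atMost_iff)
  finally show ?thesis .
qed

lemma smult_sum_right: "smult a (sum f S) = (\<Sum>i\<in>S. smult a (f i))"
  by (induct S rule: infinite_finite_induct) (auto simp: smult_add_right)

lemma op_smult: "op n Q (smult a p) = smult a (op n Q p)"
  unfolding op_def funpow_pderiv_smult smult_sum_right smult_smult by (simp add: ac_simps)

lemma op_Pol: "cpoly (op n Q (prodlin n r)) z = Pol n Q (\<lambda>j. z - of_real (r j))"
proof (induct n arbitrary: Q r)
  case 0 then show ?case by (simp add: op_def)
next
  case (Suc n)
  have "op (Suc n) Q (prodlin (Suc n) r) = [:-r 0, 1:] * op n (D1 n Q) (prodlin n (\<lambda>j. r (Suc j))) + op n (D2 n Q) (prodlin n (\<lambda>j. r (Suc j)))"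
    unfolding prodlin.simps by (rule op_step) simp
  then show ?case by (simp add: Suc algebra_simps)
qed



lemma cs_sum:
  fixes b :: "nat \<Rightarrow> real"
  shows "(\<Sum>j<m. b j)^2 \<le> real m * (\<Sum>j<m. (b j)^2)"
proof -
  have e1: "(\<Sum>k<m. (b j - b k)^2) = real m * (b j)^2 + (\<Sum>k<m. (b k)^2) - 2 * b j * (\<Sum>k<m. b k)" for j
    by (simp add: power2_diff sum.distrib sum_subtractf sum_distrib_left algebra_simps)
  have e2: "(\<Sum>j<m. real m * (b j)^2 + (\<Sum>k<m. (b k)^2) - 2 * b j * (\<Sum>k<m. b k))
      = 2 * (real m * (\<Sum>j<m. (b j)^2)) - 2 * (\<Sum>j<m. b j)^2"
    by (simp add: sum.distrib sum_subtractf sum_distrib_left sum_distrib_right power2_eq_square algebra_simps)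
  have "0 \<le> (\<Sum>j<m. \<Sum>k<m. (b j - b k)^2)" by (intro sum_nonneg) simp
  also have "\<dots> = 2 * (real m * (\<Sum>j<m. (b j)^2)) - 2 * (\<Sum>j<m. b j)^2"
    unfolding e1 e2 ..
  finally show ?thesis by simp
qed

lemma hyperbolic_smult: "c \<noteq> 0 \<Longrightarrow> hyperbolic (smult c p) \<longleftrightarrow> hyperbolic p"
  by (simp add: hyperbolic_cpoly)

lemma hyperbolic_cong: "(\<And>z. cpoly p z = cpoly q z) \<Longrightarrow> hyperbolic p \<longleftrightarrow> hyperbolic q"
  by (simp add: hyperbolic_cpoly)

lemma diag_sign:
  fixes N :: nat
  assumes hQ: "hyperbolic Q" and dQ: "degree Q \<le> N"
  shows "Im ((cpoly Q \<i> - \<i> * (of_real (1 / real N) * cpoly (pderiv Q) \<i>)) * cnj (of_real (1 / real N) * cpoly (pderiv Q) \<i>)) \<ge> 0"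
proof -
  obtain r where H: "\<And>w. Im w > 0 \<Longrightarrow> cpoly Q w \<noteq> 0"
    "\<And>w. Im w > 0 \<Longrightarrow> cpoly (pderiv Q) w = cpoly Q w * (\<Sum>j<degree Q. 1 / (w - of_real (r j)))"
    using hyp_data[OF hQ] by metis
  define m where "m = degree Q"
  define S where "S = (\<Sum>j<m. 1 / (\<i> - of_real (r j)))"
  define P where "P = cpoly Q \<i>"
  define c where "c = 1 / real N"
  have c0: "c \<ge> 0" unfolding c_def by simp
  have dP: "cpoly (pderiv Q) \<i> = P * S" unfolding P_def S_def m_def using H(2)[of \<i>] by simp
  have "(P - \<i> * (of_real c * (P * S))) * cnj (of_real c * (P * S)) = of_real c * (P * cnj P) * ((1 - \<i> * of_real c * S) * cnj S)"
    by (simp add: algebra_simps)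
  also have "P * cnj P = of_real ((cmod P)^2)" by (rule complex_norm_square[symmetric])
  finally have e: "(P - \<i> * (of_real c * (P * S))) * cnj (of_real c * (P * S)) = of_real (c * (cmod P)^2) * ((1 - \<i> * of_real c * S) * cnj S)"
    by simp
  have "Im ((1 - \<i> * of_real c * S) * cnj S) = - Im S - c * (cmod S)^2"
  proof -
    have "(1 - \<i> * of_real c * S) * cnj S = cnj S - \<i> * of_real c * (S * cnj S)" by (simp add: algebra_simps)
    also have "S * cnj S = of_real ((cmod S)^2)" by (rule complex_norm_square[symmetric])
    finally show ?thesis by simp
  qed
  moreover have "c * (cmod S)^2 \<le> - Im S"
  proof -
    define b where "b j = cmod (1 / (\<i> - of_real (r j)))" for j
    have b2: "(b j)^2 = 1 / ((r j)^2 + 1)" for j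
    proof -
      have "(cmod (\<i> - of_real (r j)))^2 = (r j)^2 + 1" by (simp add: cmod_power2)
      then show ?thesis unfolding b_def by (simp add: norm_divide power_divide)
    qed
    have ImS: "- Im S = (\<Sum>j<m. (b j)^2)"
      unfolding S_def Im_S b2 by simp
    have "cmod S \<le> (\<Sum>j<m. b j)" unfolding S_def b_def by (rule norm_sum)
    then have "(cmod S)^2 \<le> (\<Sum>j<m. b j)^2" by (simp add: power_mono)
    also have "\<dots> \<le> real m * (\<Sum>j<m. (b j)^2)" by (rule cs_sum)
    also have "\<dots> \<le> real N * (\<Sum>j<m. (b j)^2)"
      using dQ unfolding m_def by (intro mult_right_mono) (simp_all add: sum_nonneg)
    finally have "(cmod S)^2 \<le> real N * (- Im S)" unfolding ImS .
    then show ?thesis unfolding c_def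
      by (cases "N = 0") (simp_all add: ImS sum_nonneg field_simps)
  qed
  ultimately have "Im ((1 - \<i> * of_real c * S) * cnj S) \<ge> 0" by simp
  then have "Im (of_real (c * (cmod P)^2) * ((1 - \<i> * of_real c * S) * cnj S)) \<ge> 0"
    using c0 by simp
  then show ?thesis unfolding dP P_def[symmetric] c_def[symmetric] e .
qed

lemma indep_Im:
  fixes A B :: complex
  assumes "A \<noteq> 0" "\<And>t. of_real t * A + B \<noteq> 0"
  shows "Im (B * cnj A) \<noteq> 0"
proof
  assume im: "Im (B * cnj A) = 0"
  define u where "u = Re (B * cnj A)"
  have u: "B * cnj A = of_real u" unfolding u_def using im by (simp add: complex_eq_iff)
  have nA: "(cmod A)^2 > 0" using assms(1) by simp
  define t where "t = - u / (cmod A)^2"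
  have "(of_real t * A + B) * cnj A = of_real t * (A * cnj A) + B * cnj A" by (simp add: algebra_simps)
  also have "A * cnj A = of_real ((cmod A)^2)" by (rule complex_norm_square[symmetric])
  finally have "(of_real t * A + B) * cnj A = of_real (t * (cmod A)^2 + u)" unfolding u by simp
  also have "t * (cmod A)^2 + u = 0" unfolding t_def using nA by simp
  finally have "(of_real t * A + B) * cnj A = 0" by simp
  then show False using assms by simp
qed



lemma Pol_nonzero:
  "hyperbolic Q \<Longrightarrow> degree Q \<le> n \<Longrightarrow> (\<forall>j<n. Im (x j) > 0) \<Longrightarrow> Pol n Q x \<noteq> 0"
proof (induct n arbitrary: Q x)
  case 0
  then obtain c where c: "Q = [:c:]" by (metis degree_eq_zeroE le_zero_eq)
  then have "c \<noteq> 0" using hyperbolic_nz[OF 0(1)] by simp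
  then show ?case using c by simp
next
  case (Suc n)
  note hQ = Suc(2) and dQ = Suc(3) and xH = Suc(4)
  have Qnz: "Q \<noteq> 0" using hyperbolic_nz[OF hQ] .
  show ?case
  proof (cases "degree Q = 0")
    case True
    then obtain c where c: "Q = [:c:]" by (metis degree_eq_zeroE)
    then have "c \<noteq> 0" using Qnz by simp
    then show ?thesis using c by (simp only: Pol_const) simp
  next
    case deg: False
    show ?thesis
    proof (cases "\<exists>t c. Q = smult c ([:-t, 1:] ^ Suc n)")
      case True
      then obtain t c where Qtc: "Q = smult c ([:-t, 1:] ^ Suc n)" by blast
      then have "c \<noteq> 0" using Qnz by auto
      moreover have "x j - of_real t \<noteq> 0" if "j < Suc n" for j
        using xH that by (auto simp: complex_eq_iff)
      ultimately show ?thesis unfolding Qtc Pol_pow by simp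
    next
      case np: False
      let ?H = "\<lambda>y::nat \<Rightarrow> complex. \<forall>j<n. Im (y j) > 0"
      define A where "A y = Pol n (D1 n Q) y" for y
      define B where "B y = Pol n (D2 n Q) y" for y
      have hD1: "hyperbolic (D1 n Q)"
        unfolding D1_def using hyperbolic_pderiv[OF hQ] deg by (simp add: hyperbolic_smult)
      have dD1: "degree (D1 n Q) \<le> n" by (rule degree_D1[OF dQ])
      have dD2: "degree (D2 n Q) \<le> n" by (rule degree_D2[OF dQ])
      have A0: "A y \<noteq> 0" if "?H y" for y
        unfolding A_def by (rule Suc(1)[OF hD1 dD1 that])
      have AB: "of_real t * A y + B y \<noteq> 0" if "?H y" for y t
      proof -
        have eq: "smult t (D1 n Q) + D2 n Q = Q - smult (1 / real (Suc n)) ([:-t, 1:] * pderiv Q)"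
        proof -
          have e1: "[:-t, 1:] = [:0, 1:] - [:t:]" by simp
          have e2: "[:t:] * pderiv Q = smult t (pderiv Q)" by (simp add: mult_pCons_left)
          have "[:-t, 1:] * pderiv Q = [:0, 1:] * pderiv Q - smult t (pderiv Q)"
            by (subst e1) (simp only: left_diff_distrib e2)
          then have X: "[:0, 1:] * pderiv Q = [:-t, 1:] * pderiv Q + smult t (pderiv Q)"
            by (simp add: algebra_simps)
          show ?thesis unfolding D1_def D2_def X smult_add_right smult_smult
            by (simp add: mult.commute algebra_simps)
        qed
        have hR: "hyperbolic (smult t (D1 n Q) + D2 n Q)"
          unfolding eq using np by (intro hyperbolic_polar[OF hQ dQ]) blast
        have dR: "degree (smult t (D1 n Q) + D2 n Q) \<le> n"
          using dD1 dD2 by (intro degree_add_le) (simp_all add: order.trans[OF degree_smult_le])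
        have "Pol n (smult t (D1 n Q) + D2 n Q) y \<noteq> 0" by (rule Suc(1)[OF hR dR that])
        then show ?thesis unfolding A_def B_def by (simp add: Pol_add Pol_smult)
      qed
      define g where "g y = Im (B y * cnj (A y))" for y
      have g0: "g y \<noteq> 0" if "?H y" for y
        unfolding g_def by (rule indep_Im[OF A0[OF that] AB[OF that]])
      have Hi: "?H (\<lambda>_. \<i>)" by simp
      have gi: "g (\<lambda>_. \<i>) > 0"
      proof -
        have dA: "A (\<lambda>_. \<i>) = of_real (1 / real (Suc n)) * cpoly (pderiv Q) \<i>"
          unfolding A_def Pol_diag[OF dD1] by (simp add: D1_def)
        have dB: "B (\<lambda>_. \<i>) = cpoly Q \<i> - \<i> * (of_real (1 / real (Suc n)) * cpoly (pderiv Q) \<i>)"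
          unfolding B_def Pol_diag[OF dD2] by (simp add: D2_def algebra_simps)
        have "g (\<lambda>_. \<i>) \<ge> 0" unfolding g_def dA dB by (rule diag_sign[OF hQ dQ])
        with g0[OF Hi] show ?thesis by linarith
      qed
      define x' where "x' = (\<lambda>j. x (Suc j))"
      have Hx': "?H x'" unfolding x'_def using xH by simp
      define y where "y s = (\<lambda>j. of_real (1 - s) * \<i> + of_real s * x' j)" for s :: real
      have Hy: "?H (y s)" if "0 \<le> s" "s \<le> 1" for s
      proof (intro allI impI)
        fix j assume j: "j < n"
        have "Im (y s j) = (1 - s) + s * Im (x' j)" unfolding y_def by simp
        moreover have "(1 - s) + s * Im (x' j) > 0"
        proof (cases "s = 0")
          case True then show ?thesis by simp
        next
          case False
          then have "s * Im (x' j) > 0" using that Hx' j by simp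
          then show ?thesis using that by linarith
        qed
        ultimately show "Im (y s j) > 0" by simp
      qed
      have y0: "y 0 = (\<lambda>_. \<i>)" unfolding y_def by simp
      have y1: "y 1 = x'" unfolding y_def by simp
      have cont: "continuous_on {0..1} (\<lambda>s. g (y s))"
      proof -
        have cj: "continuous_on {0..1} (\<lambda>s. of_real (1 - s) * \<i> + of_real s * x' j)" for j
          by (intro continuous_intros)
        have cA: "continuous_on {0..1} (\<lambda>s. A (y s))"
          unfolding A_def y_def by (rule Pol_cont[OF cj])
        have cB: "continuous_on {0..1} (\<lambda>s. B (y s))"
          unfolding B_def y_def by (rule Pol_cont[OF cj])
        show ?thesis unfolding g_def by (intro continuous_intros cA cB)
      qed
      have gx: "g x' > 0"
      proof (rule ccontr)
        assume "\<not> g x' > 0"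
        then have "g (y 1) \<le> 0" unfolding y1 by simp
        moreover have "0 \<le> g (y 0)" unfolding y0 using gi by simp
        ultimately obtain s where s: "0 \<le> s" "s \<le> 1" "g (y s) = 0"
          using IVT2'[of "\<lambda>s. g (y s)" 1 0 0, OF _ _ _ cont] by auto
        then show False using g0[OF Hy[OF s(1,2)]] by simp
      qed
      show "Pol (Suc n) Q x \<noteq> 0"
      proof
        assume "Pol (Suc n) Q x = 0"
        then have eB: "B x' = - x 0 * A x'" unfolding A_def B_def x'_def by (simp add: eq_neg_iff_add_eq_0 add.commute)
        have "B x' * cnj (A x') = - x 0 * of_real ((cmod (A x'))^2)"
          unfolding eB complex_norm_square by (simp add: algebra_simps)
        then have "g x' = - Im (x 0) * (cmod (A x'))^2" unfolding g_def by simp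
        moreover have "(cmod (A x'))^2 > 0" using A0[OF Hx'] by simp
        moreover have "Im (x 0) > 0" using xH by simp
        ultimately have "g x' < 0" by (simp add: mult_pos_pos)
        with gx show False by simp
      qed
    qed
  qed
qed



definition scale :: "real \<Rightarrow> real list \<Rightarrow> real list" where
  "scale s b = map (\<lambda>k. s ^ k * b ! (k - 1)) [1..<length b + 1]"

lemma length_scale[simp]: "length (scale s b) = length b"
  by (simp add: scale_def del: upt_Suc)

lemma nth_scale: "k < length b \<Longrightarrow> scale s b ! k = s ^ Suc k * b ! k"
  by (simp add: scale_def nth_map nth_upt del: upt_Suc)

lemma scale_1: "scale 1 b = b"
  by (rule nth_equalityI) (simp_all add: nth_scale)

lemma length_bmap[simp]: "length (bmap d a) = d"
  by (simp add: bmap_def del: upt_Suc)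

lemma nth_bmap: "k < d \<Longrightarrow> bmap d a ! k = fact d / fact (d - Suc k) * a ! k"
  by (simp add: bmap_def nth_map nth_upt del: upt_Suc)

lemma coeff_monic_of:
  "coeff (monic_of b) j = (if j = length b then 1 else if j < length b then b ! (length b - j - 1) else 0)"
proof -
  define n where "n = length b"
  have "coeff (monic_of b) j = (if n = j then 1 else 0) + (\<Sum>k=1..n. if n - k = j then b ! (k - 1) else 0)"
    unfolding monic_of_def n_def[symmetric] by (simp only: coeff_add coeff_sum coeff_monom)
  also have "(\<Sum>k=1..n. if n - k = j then b ! (k - 1) else 0) = (if j < n then b ! (n - j - 1) else 0)"
  proof (cases "j < n")
    case True
    have "(\<Sum>k=1..n. if n - k = j then b ! (k - 1) else 0) = (\<Sum>k=1..n. if k = n - j then b ! (k - 1) else 0)"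
      by (rule sum.cong) (use True in auto)
    also have "\<dots> = b ! (n - j - 1)" using True by (simp add: sum.delta)
    finally show ?thesis using True by simp
  next
    case False
    have "(\<Sum>k=1..n. if n - k = j then b ! (k - 1) else 0) = (\<Sum>k=1..n. 0)"
      by (rule sum.cong) (use False in auto)
    then show ?thesis using False by simp
  qed
  finally show ?thesis unfolding n_def by auto
qed

lemma coeff_monic_of_k:
  "1 \<le> k \<Longrightarrow> k \<le> length b \<Longrightarrow> coeff (monic_of b) (length b - k) = b ! (k - 1)"
  by (simp add: coeff_monic_of)

lemma degree_monic_of[simp]: "degree (monic_of b) = length b"
proof (rule antisym)
  show "degree (monic_of b) \<le> length b" by (rule degree_le) (simp add: coeff_monic_of)
  show "length b \<le> degree (monic_of b)" by (rule le_degree) (simp add: coeff_monic_of)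
qed

lemma lead_coeff_monic_of[simp]: "lead_coeff (monic_of b) = 1"
  by (simp add: coeff_monic_of)

lemma cpoly_monic_of:
  "cpoly (monic_of b) z = z ^ length b + (\<Sum>k=1..length b. of_real (b ! (k - 1)) * z ^ (length b - k))"
  by (simp add: monic_of_def cpoly_sum)

lemma hyperbolic_scale:
  assumes "hyperbolic (monic_of b)"
  shows "hyperbolic (monic_of (scale s b))"
proof (cases "s = 0")
  case True
  have "cpoly (monic_of (scale s b)) z = z ^ length b" for z
  proof -
    have "(\<Sum>k=1..length b. of_real (scale s b ! (k - 1)) * z ^ (length b - k)) = (\<Sum>k=1..length b. (0::complex))"
      by (rule sum.cong) (auto simp: nth_scale True)
    then show ?thesis by (simp add: cpoly_monic_of)
  qed
  then show ?thesis unfolding hyperbolic_cpoly by simp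
next
  case False
  let ?n = "length b"
  have sc: "cpoly (monic_of (scale s b)) z = of_real s ^ ?n * cpoly (monic_of b) (z / of_real s)" for z
  proof -
    have "(\<Sum>k=1..?n. of_real (scale s b ! (k - 1)) * z ^ (?n - k))
        = (\<Sum>k=1..?n. of_real s ^ ?n * (of_real (b ! (k - 1)) * (z / of_real s) ^ (?n - k)))"
    proof (rule sum.cong)
      fix k assume k: "k \<in> {1..?n}"
      then have kk: "k - 1 < ?n" "Suc (k - 1) = k" by auto
      have pw: "(of_real s :: complex) ^ ?n = of_real s ^ k * of_real s ^ (?n - k)"
        using k by (simp add: power_add[symmetric])
      show "of_real (scale s b ! (k - 1)) * z ^ (?n - k) = of_real s ^ ?n * (of_real (b ! (k - 1)) * (z / of_real s) ^ (?n - k))"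
        unfolding nth_scale[OF kk(1)] kk(2) pw using False by (simp add: power_divide field_simps)
    qed simp
    then show ?thesis using False
      by (simp add: cpoly_monic_of sum_distrib_left distrib_left power_divide)
  qed
  show ?thesis unfolding hyperbolic_cpoly
  proof (intro allI impI)
    fix z assume "cpoly (monic_of (scale s b)) z = 0"
    then have "cpoly (monic_of b) (z / of_real s) = 0" using False sc by simp
    then have "z / of_real s \<in> \<real>" using assms by (simp add: hyperbolic_cpoly)
    then have "of_real s * (z / of_real s) \<in> \<real>" by (intro Reals_mult) simp_all
    moreover have "of_real s * (z / of_real s) = z" using False by simp
    ultimately show "z \<in> \<real>" by simp
  qed
qed

lemma nuij_sum:
  "nuij_op a s p = (\<Sum>k\<le>length a. smult (if k = 0 then 1 else a ! (k - 1) * s ^ k) ((pderiv ^^ k) p))"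
proof -
  have "(\<Sum>k\<le>length a. smult (if k = 0 then 1 else a ! (k - 1) * s ^ k) ((pderiv ^^ k) p))
      = (\<Sum>k\<in>{0..length a}. smult (if k = 0 then 1 else a ! (k - 1) * s ^ k) ((pderiv ^^ k) p))"
    by (simp add: atMost_atLeast0)
  also have "\<dots> = p + (\<Sum>k\<in>{Suc 0..length a}. smult (if k = 0 then 1 else a ! (k - 1) * s ^ k) ((pderiv ^^ k) p))"
    by (subst sum.atLeast_Suc_atMost) simp_all
  also have "(\<Sum>k\<in>{Suc 0..length a}. smult (if k = 0 then 1 else a ! (k - 1) * s ^ k) ((pderiv ^^ k) p))
      = (\<Sum>k=1..length a. smult (a ! (k - 1) * s ^ k) ((pderiv ^^ k) p))"
    by (rule sum.cong) auto
  finally show ?thesis unfolding nuij_op_def by simp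
qed

lemma nuij_op_eq:
  assumes "length a = d"
  shows "nuij_op a s p = op d (monic_of (scale s (bmap d a))) p"
  unfolding nuij_sum op_def assms
proof (rule sum.cong)
  fix k assume k: "k \<in> {..d}"
  show "smult (if k = 0 then 1 else a ! (k - 1) * s ^ k) ((pderiv ^^ k) p) =
        smult (coeff (monic_of (scale s (bmap d a))) (d - k) * fact (d - k) / fact d) ((pderiv ^^ k) p)"
  proof (cases "k = 0")
    case True then show ?thesis by (simp add: coeff_monic_of)
  next
    case False
    then have kk: "1 \<le> k" "k \<le> d" "k - 1 < d" "Suc (k - 1) = k" "d - Suc (k - 1) = d - k" using k by auto
    have "coeff (monic_of (scale s (bmap d a))) (d - k) = s ^ k * (fact d / fact (d - k) * a ! (k - 1))"
      using coeff_monic_of_k[of k "scale s (bmap d a)"] kk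
      by (simp add: nth_scale nth_bmap)
    then show ?thesis using False by (simp add: field_simps)
  qed
qed simp

definition Dop :: "nat \<Rightarrow> real poly \<Rightarrow> real poly \<Rightarrow> real poly" where
  "Dop n A p = (\<Sum>k\<le>n. smult (coeff A (n - k)) ((pderiv ^^ k) p))"

lemma nuij_op_Dop:
  assumes "length a = d"
  shows "nuij_op a s p = Dop d (monic_of (scale s a)) p"
  unfolding nuij_sum Dop_def assms
proof (rule sum.cong)
  fix k assume k: "k \<in> {..d}"
  show "smult (if k = 0 then 1 else a ! (k - 1) * s ^ k) ((pderiv ^^ k) p) =
        smult (coeff (monic_of (scale s a)) (d - k)) ((pderiv ^^ k) p)"
  proof (cases "k = 0")
    case True then show ?thesis using assms by (simp add: coeff_monic_of)
  next
    case False
    then have kk: "1 \<le> k" "k \<le> length a" "k - 1 < length a" "Suc (k - 1) = k" using k assms by auto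
    have "coeff (monic_of (scale s a)) (d - k) = s ^ k * a ! (k - 1)"
      using coeff_monic_of_k[of k "scale s a"] kk assms by (simp add: nth_scale)
    then show ?thesis using False by (simp add: mult.commute)
  qed
qed simp

lemma Dop_lin: "Dop n A (p - smult a q) = Dop n A p - smult a (Dop n A q)"
  unfolding Dop_def by (simp add: funpow_pderiv_diff funpow_pderiv_smult smult_sum_right
      smult_diff_right sum_subtractf algebra_simps)

lemma Dop_step:
  assumes "degree A \<le> n"
  shows "Dop (Suc n) ([:-a, 1:] * A) p = Dop n A (p - smult a (pderiv p))"
proof -
  have cf: "coeff ([:-a, 1:] * A) i = coeff (pCons 0 A) i - a * coeff A i" for i
    by (simp add: mult_pCons_left)
  have "Dop (Suc n) ([:-a, 1:] * A) p = (\<Sum>k\<le>Suc n. smult (coeff (pCons 0 A) (Suc n - k)) ((pderiv ^^ k) p))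
      - smult a (\<Sum>k\<le>Suc n. smult (coeff A (Suc n - k)) ((pderiv ^^ k) p))"
    by (simp only: Dop_def cf smult_diff_left sum_subtractf smult_sum_right smult_smult)
  also have "(\<Sum>k\<le>Suc n. smult (coeff (pCons 0 A) (Suc n - k)) ((pderiv ^^ k) p)) = Dop n A p"
    unfolding Dop_def by (simp add: Suc_diff_le)
  also have "(\<Sum>k\<le>Suc n. smult (coeff A (Suc n - k)) ((pderiv ^^ k) p)) = Dop n A (pderiv p)"
  proof -
    have "coeff A (Suc n) = 0" using assms by (intro coeff_eq_0) simp
    then show ?thesis unfolding Dop_def
      by (simp only: sum.atMost_Suc_shift) (simp add: funpow_swap1)
  qed
  finally show ?thesis by (simp add: Dop_lin)
qed

lemma Dop_hyp: "hyperbolic p \<Longrightarrow> hyperbolic (Dop n (prodlin n r) p)"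
proof (induct n arbitrary: r p)
  case 0 then show ?case by (simp add: Dop_def)
next
  case (Suc n)
  have "Dop (Suc n) (prodlin (Suc n) r) p = Dop n (prodlin n (\<lambda>j. r (Suc j))) (p - smult (r 0) (pderiv p))"
    unfolding prodlin.simps by (rule Dop_step) simp
  then show ?case using Suc(1)[OF hyperbolic_Lop[OF Suc(2)]] by simp
qed



lemma H1_sub_Nuij: "H1 d \<subseteq> Nuij d"
proof
  fix b assume "b \<in> H1 d"
  then have lb: "length b = d" and hb: "hyperbolic (monic_of b)" by (auto simp: H1_def)
  show "b \<in> Nuij d" unfolding Nuij_def
  proof (intro CollectI conjI allI impI lb)
    fix p s assume p: "hyperbolic p \<and> degree p = d"
    define A where "A = monic_of (scale s b)"
    have hA: "hyperbolic A" unfolding A_def by (rule hyperbolic_scale[OF hb])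
    obtain r where r: "A = smult (lead_coeff A) (prodlin (degree A) r)"
      using hyperbolic_factor[OF hA] by blast
    have l1: "lead_coeff A = 1" and dA: "degree A = d" unfolding A_def using lb by (simp_all add: coeff_monic_of)
    from r have "A = smult (coeff A d) (prodlin d r)" by (simp only: dA)
    moreover have "coeff A d = 1" using l1 dA by simp
    ultimately have "A = prodlin d r" by simp
    then have "nuij_op b s p = Dop d (prodlin d r) p"
      using nuij_op_Dop[OF lb] unfolding A_def by simp
    then show "hyperbolic (nuij_op b s p)" using Dop_hyp p by simp
  qed
qed

lemma hyperbolic_p0: "hyperbolic (prodlin d (\<lambda>_. 0))"
  unfolding hyperbolic_iff_Im cpoly_prodlin
proof (intro allI impI)
  fix z :: complex assume "Im z > 0"
  then have "z \<noteq> 0" by auto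
  then show "(\<Prod>j<d. z - of_real 0) \<noteq> 0" by simp
qed

lemma Nuij_sub: "Nuij d \<subseteq> {a. length a = d \<and> bmap d a \<in> H1 d}"
proof
  fix a assume "a \<in> Nuij d"
  then have la: "length a = d" and N: "\<And>p s. hyperbolic p \<Longrightarrow> degree p = d \<Longrightarrow> hyperbolic (nuij_op a s p)"
    by (auto simp: Nuij_def)
  define p0 where "p0 = prodlin d (\<lambda>_. 0)"
  define Q where "Q = monic_of (bmap d a)"
  have "hyperbolic (nuij_op a 1 p0)" unfolding p0_def by (rule N[OF hyperbolic_p0]) simp
  moreover have "nuij_op a 1 p0 = op d Q p0" unfolding Q_def using nuij_op_eq[OF la, of 1 p0] by (simp add: scale_1)
  moreover have "cpoly (op d Q p0) z = cpoly Q z" for z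
  proof -
    have "cpoly (op d Q p0) z = Pol d Q (\<lambda>_. z)" unfolding p0_def op_Pol by simp
    also have "\<dots> = cpoly Q z" by (rule Pol_diag) (simp add: Q_def)
    finally show ?thesis .
  qed
  ultimately have "hyperbolic Q" using hyperbolic_cong by metis
  then show "a \<in> {a. length a = d \<and> bmap d a \<in> H1 d}" using la unfolding Q_def H1_def by simp
qed

lemma sub_Nuij: "{a. length a = d \<and> bmap d a \<in> H1 d} \<subseteq> Nuij d"
proof
  fix a assume "a \<in> {a. length a = d \<and> bmap d a \<in> H1 d}"
  then have la: "length a = d" and hb: "hyperbolic (monic_of (bmap d a))" by (auto simp: H1_def)
  show "a \<in> Nuij d" unfolding Nuij_def
  proof (intro CollectI conjI allI impI la)
    fix p s assume p: "hyperbolic p \<and> degree p = d"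
    define Q where "Q = monic_of (scale s (bmap d a))"
    have hQ: "hyperbolic Q" unfolding Q_def by (rule hyperbolic_scale[OF hb])
    have dQ: "degree Q \<le> d" unfolding Q_def by simp
    obtain r where r: "p = smult (lead_coeff p) (prodlin (degree p) r)"
      using hyperbolic_factor p by blast
    have "p \<noteq> 0" using hyperbolic_nz p by blast
    then have c0: "lead_coeff p \<noteq> 0" by (rule leading_coeff_neq_0)
    have e: "nuij_op a s p = smult (lead_coeff p) (op d Q (prodlin d r))"
      unfolding nuij_op_eq[OF la] Q_def[symmetric] by (subst r) (simp add: op_smult p)
    show "hyperbolic (nuij_op a s p)" unfolding e hyperbolic_iff_Im
    proof (intro allI impI)
      fix z :: complex assume z: "Im z > 0"
      have "Pol d Q (\<lambda>j. z - of_real (r j)) \<noteq> 0"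
        by (rule Pol_nonzero[OF hQ dQ]) (simp add: z)
      then show "cpoly (smult (lead_coeff p) (op d Q (prodlin d r))) z \<noteq> 0"
        using c0 by (simp add: op_Pol)
    qed
  qed
qed

theorem corollary2p4:
  fixes d :: nat
  assumes "d \<ge> 1"
  shows "H1 d \<subseteq> Nuij d \<and> Nuij d = {a. length a = d \<and> bmap d a \<in> H1 d}"
  using H1_sub_Nuij Nuij_sub sub_Nuij by blast

end
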